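(* Let $f$ be a homeomorphism of a compact metric space $(X,d)$ and let $\mu$ be a Borel measure on $X$ with $\mu(X)>0$. If $x\in X$ is a $\mu$-uniformly expansive point of $f$, then $x$ is a $\mu$-topologically stable point of $f$. Moreover, if $x$ is also a $\mu$-shadowable point of $f$, then $x$ is a strong $\mu$-topologically stable point of $f$.
   Context: $B(x,\epsilon)$ and $B[x,\epsilon]$ are the open and closed balls; $\mathcal{O}_g(x)=\{g^n(x):n\in\mathbb{Z}\}$; $d_{C^0}(f,g)=\sup_x d(f(x),g(x))$. For a point $x$, $\mathfrak{c}>0$ and $z\in B(x,\mathfrak{c})$, $\Gamma^{\mathfrak{c}}_f(z)=\{y\in B(x,\mathfrak{c}): d(f^n(y),f^n(z))\le\mathfrak{c}\ \forall n\in\mathbb{Z}\}$; $x$ is a $\mu$-uniformly expansive point of $f$ if there is $\mathfrak{c}>0$ with $\mu(\Gamma^{\mathfrak{c}}_f(z))=0$ for every $z\in B(x,\mathfrak{c})$. A $\delta$-pseudo orbit for $f$ is $\{x_n\}_{n\in\mathbb{Z}}$ with $d(f(x_n),x_{n+1})<\delta$ for all $n$; it is through a set $B$ if $x_0\in B$; it is $\epsilon$-traced if there is $y$ with $d(f^n(y),x_n)<\epsilon$ for all $n$. $x$ is $\mu$-shadowable if for every $\epsilon>0$ there are $\delta>0$ and a Borel set $B$ with $\mu(X\setminus B)=0$ such that every $\delta$-pseudo orbit through $B\cap B(x,\delta)$ is $\epsilon$-traced by some point of $X$. For $Z\subset X$, a set-valued map $H:Z\to 2^X$ has domain $Dom(H)=\{z:H(z)\ne\emptyset\}$;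 it is compact valued if each $H(z)$ is compact; $d(H,Id)\le\epsilon$ means $H(z)\subset B[z,\epsilon]$ for all $z$; it is upper semi-continuous if for each $z\in Dom(H)$ and open $O\supset H(z)$ there is $\gamma>0$ with $H(w)\subset O$ whenever $w\in Z$, $d(w,z)<\gamma$; $f\circ H=H\circ g$ means $f(H(z))=H(g(z))$ for all $z$. $x$ is a $\mu$-topologically stable point of $f$ if for every $\epsilon>0$ there is $\delta>0$ such that for every homeomorphism $g$ of $X$ with $d_{C^0}(f,g)\le\delta$ there is an upper semi-continuous compact valued $H:\overline{\mathcal{O}_g(x)}\to 2^X$ with measurable domain such that (i) $\mu(H(z))=0$ for each $z\in B(x,\delta/4)\cap\overline{\mathcal{O}_g(x)}$, (ii) $d(H,Id)\le\epsilon$, (iii) $f\circ H=H\circ g$. $x$ is strong $\mu$-topologically stable if moreover (for the given $\epsilon$, together with $\delta$) there is a Borel set $B$ with $\mu(X\setminus B)=0$ such that additionally (iv) $\mu(X\setminus Dom(H))\le\mu(X\setminus U)$ with $U=B\cap B(x,\delta)\cap\overline{\mathcal{O}_g(x)}$. *)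

theory Defs
  imports "HOL-Analysis.Analysis"
begin

text \<open>Homeomorphism of the whole space (the space X is the type universe).\<close>
definition is_homeo :: "('a::metric_space \<Rightarrow> 'a) \<Rightarrow> bool" where
  "is_homeo f \<longleftrightarrow> (\<exists>g. homeomorphism UNIV UNIV f g)"

definition iter :: "('a \<Rightarrow> 'a) \<Rightarrow> int \<Rightarrow> 'a \<Rightarrow> 'a" where
  "iter f n = (if 0 \<le> n then f ^^ nat n else inv f ^^ nat (- n))"

definition orbit :: "('a \<Rightarrow> 'a) \<Rightarrow> 'a \<Rightarrow> 'a set" where
  "orbit g x = {iter g n x | n. True}"

definition Gamma :: "('a::metric_space \<Rightarrow> 'a) \<Rightarrow> real \<Rightarrow> 'a \<Rightarrow> 'a \<Rightarrow> 'a set" where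
  "Gamma f c x z = {y \<in> ball x c. \<forall>n::int. dist (iter f n y) (iter f n z) \<le> c}"

definition unif_expansive_point :: "'a measure \<Rightarrow> ('a::metric_space \<Rightarrow> 'a) \<Rightarrow> 'a \<Rightarrow> bool" where
  "unif_expansive_point \<mu> f x \<longleftrightarrow>
     (\<exists>c>0. \<forall>z\<in>ball x c. emeasure \<mu> (Gamma f c x z) = 0)"

definition pseudo_orbit :: "('a::metric_space \<Rightarrow> 'a) \<Rightarrow> real \<Rightarrow> (int \<Rightarrow> 'a) \<Rightarrow> bool" where
  "pseudo_orbit f \<delta> \<xi> \<longleftrightarrow> (\<forall>n. dist (f (\<xi> n)) (\<xi> (n + 1)) < \<delta>)"

definition traced :: "('a::metric_space \<Rightarrow> 'a) \<Rightarrow> real \<Rightarrow> (int \<Rightarrow> 'a) \<Rightarrow> bool" where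
  "traced f \<epsilon> \<xi> \<longleftrightarrow> (\<exists>y. \<forall>n. dist (iter f n y) (\<xi> n) < \<epsilon>)"

definition shadowable_point :: "'a measure \<Rightarrow> ('a::metric_space \<Rightarrow> 'a) \<Rightarrow> 'a \<Rightarrow> bool" where
  "shadowable_point \<mu> f x \<longleftrightarrow>
     (\<forall>\<epsilon>>0. \<exists>\<delta>>0. \<exists>B \<in> sets \<mu>. emeasure \<mu> (UNIV - B) = 0 \<and>
        (\<forall>\<xi>. pseudo_orbit f \<delta> \<xi> \<and> \<xi> 0 \<in> B \<inter> ball x \<delta> \<longrightarrow> traced f \<epsilon> \<xi>))"

definition C0_close :: "('a::metric_space \<Rightarrow> 'a) \<Rightarrow> ('a \<Rightarrow> 'a) \<Rightarrow> real \<Rightarrow> bool" where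
  "C0_close f g \<delta> \<longleftrightarrow> (\<forall>y. dist (f y) (g y) \<le> \<delta>)"

definition dom_sv :: "'a set \<Rightarrow> ('a \<Rightarrow> 'b set) \<Rightarrow> 'a set" where
  "dom_sv Z H = {z \<in> Z. H z \<noteq> {}}"

definition usc_on :: "'a::metric_space set \<Rightarrow> ('a \<Rightarrow> 'b::topological_space set) \<Rightarrow> bool" where
  "usc_on Z H \<longleftrightarrow> (\<forall>z \<in> dom_sv Z H. \<forall>V. open V \<and> H z \<subseteq> V \<longrightarrow>
      (\<exists>\<gamma>>0. \<forall>w\<in>Z. dist w z < \<gamma> \<longrightarrow> H w \<subseteq> V))"

definition stab_map :: "'a measure \<Rightarrow> ('a::metric_space \<Rightarrow> 'a) \<Rightarrow> ('a \<Rightarrow> 'a) \<Rightarrow> 'a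
     \<Rightarrow> real \<Rightarrow> real \<Rightarrow> ('a \<Rightarrow> 'a set) \<Rightarrow> bool" where
  "stab_map \<mu> f g x \<epsilon> \<delta> H \<longleftrightarrow>
     (let Z = closure (orbit g x) in
        usc_on Z H \<and> (\<forall>z\<in>Z. compact (H z)) \<and> dom_sv Z H \<in> sets \<mu> \<and>
        (\<forall>z \<in> ball x (\<delta>/4) \<inter> Z. emeasure \<mu> (H z) = 0) \<and>
        (\<forall>z\<in>Z. H z \<subseteq> cball z \<epsilon>) \<and>
        (\<forall>z\<in>Z. f ` H z = H (g z)))"

definition top_stable_point :: "'a measure \<Rightarrow> ('a::metric_space \<Rightarrow> 'a) \<Rightarrow> 'a \<Rightarrow> bool" where
  "top_stable_point \<mu> f x \<longleftrightarrow>
     (\<forall>\<epsilon>>0. \<exists>\<delta>>0. \<forall>g. is_homeo g \<and> C0_close f g \<delta> \<longrightarrow>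
        (\<exists>H. stab_map \<mu> f g x \<epsilon> \<delta> H))"

definition strong_top_stable_point :: "'a measure \<Rightarrow> ('a::metric_space \<Rightarrow> 'a) \<Rightarrow> 'a \<Rightarrow> bool" where
  "strong_top_stable_point \<mu> f x \<longleftrightarrow>
     (\<forall>\<epsilon>>0. \<exists>\<delta>>0. \<exists>B \<in> sets \<mu>. emeasure \<mu> (UNIV - B) = 0 \<and>
       (\<forall>g. is_homeo g \<and> C0_close f g \<delta> \<longrightarrow>
        (\<exists>H. stab_map \<mu> f g x \<epsilon> \<delta> H \<and>
           emeasure \<mu> (UNIV - dom_sv (closure (orbit g x)) H)
             \<le> emeasure \<mu> (UNIV - (B \<inter> ball x \<delta> \<inter> closure (orbit g x))))))"

end

theory Submission
  imports Defs
begin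

lemma homeo_facts:
  assumes "is_homeo f"
  shows "bij f" "continuous_on UNIV f" "continuous_on UNIV (inv f)"
proof -
  obtain g where h: "homeomorphism UNIV UNIV f g" using assms is_homeo_def by blast
  have gf: "\<And>x. g (f x) = x" and fg: "\<And>y. f (g y) = y" using h by (auto simp: homeomorphism_def)
  show b: "bij f" by (metis bijI' gf fg)
  have "inv f = g" using gf fg by (metis inv_equality ext)
  thus "continuous_on UNIV f" "continuous_on UNIV (inv f)" using h by (auto simp: homeomorphism_def)
qed

lemma cont_funpow: "continuous_on UNIV (h::'a::topological_space\<Rightarrow>'a) \<Longrightarrow> continuous_on UNIV (h ^^ k)"
proof (induction k)
  case 0 then show ?case by simp
next
  case (Suc k)
  then show ?case unfolding funpow_Suc_right
    by (metis continuous_on_compose continuous_on_subset subset_UNIV)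
qed

lemma iter_cont: "is_homeo f \<Longrightarrow> continuous_on UNIV (iter f n)"
proof -
  assume h: "is_homeo f"
  show ?thesis unfolding iter_def using cont_funpow[OF homeo_facts(2)[OF h]] cont_funpow[OF homeo_facts(3)[OF h]]
    by simp
qed

lemma iter_0[simp]: "iter f 0 y = y" by (simp add: iter_def)

lemma iter_succ:
  assumes "bij f"
  shows "iter f (n+1) y = f (iter f n y)" "iter f n (f y) = iter f (n+1) y"
proof -
  have fi: "\<And>z. f (inv f z) = z" and iif: "\<And>z. inv f (f z) = z"
    using assms by (auto simp: bij_is_surj bij_is_inj surj_f_inv_f inv_f_f)
  have "iter f (n+1) y = f (iter f n y) \<and> iter f n (f y) = iter f (n+1) y"
  proof (cases "0 \<le> n")
    case True
    then have "nat (n+1) = Suc (nat n)" by simp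
    then show ?thesis using True unfolding iter_def
      by (simp del: funpow.simps add: funpow_Suc_right funpow_swap1)
  next
    case False
    define m where "m = nat (-n) - 1"
    have m: "n = - int (Suc m)" using False unfolding m_def by arith
    then have a: "nat (- n) = Suc m" and b: "nat (-(n+1)) = m" by auto
    show ?thesis using False m unfolding iter_def
      apply (simp only: a b if_False)
      apply (cases "0 \<le> n + 1")
      by (auto simp del: funpow.simps simp add: funpow_Suc_right fi iif nat_add_distrib funpow_swap1[symmetric])
  qed
  then show "iter f (n+1) y = f (iter f n y)" "iter f n (f y) = iter f (n+1) y" by auto
qed

lemma cont_iter_comp:
  assumes "is_homeo f" "continuous_on UNIV h"
  shows "continuous_on UNIV (\<lambda>p. iter f n (h p))"
  by (rule continuous_on_compose2[OF iter_cont[OF assms(1)] assms(2)]) auto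

lemma closed_track:
  fixes f g :: "'a::metric_space \<Rightarrow> 'a"
  assumes "is_homeo f" "is_homeo g" "continuous_on UNIV (a::'b::metric_space \<Rightarrow> 'a)" "continuous_on UNIV b"
  shows "closed {p. \<forall>n. dist (iter f n (a p)) (iter g n (b p)) \<le> e}"
proof (rule closed_Collect_all)
  fix n
  show "closed {p. dist (iter f n (a p)) (iter g n (b p)) \<le> e}"
    by (rule closed_Collect_le) (intro continuous_intros cont_iter_comp assms)+
qed

lemma key:
  fixes f g :: "'a::metric_space \<Rightarrow> 'a"
  assumes cpt: "compact (UNIV::'a set)" and hf: "is_homeo f" and hg: "is_homeo g"
    and sts: "sets \<mu> = sets borel"
    and c: "c > 0" and gam: "\<forall>z\<in>ball x c. emeasure \<mu> (Gamma f c x z) = 0"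
    and e: "0 < e" "e \<le> \<epsilon>" "e \<le> c/3" and d: "0<\<delta>" "\<delta> \<le> c/3"
    and H: "H = (\<lambda>z. {y. \<forall>n. dist (iter f n y) (iter g n z) \<le> e})"
  shows "stab_map \<mu> f g x \<epsilon> \<delta> H"
proof -
  define Z where "Z = closure (orbit g x)"
  define G where "G = {p::'a\<times>'a. \<forall>n. dist (iter f n (snd p)) (iter g n (fst p)) \<le> e}"
  have bf: "bij f" and bg: "bij g" using homeo_facts hf hg by auto
  have clG: "closed G" unfolding G_def
    by (rule closed_track[OF hf hg]) (intro continuous_intros)+
  have cpG: "compact G"
    using compact_Int_closed[OF compact_Times[OF cpt cpt] clG] by simp
  have HG: "\<And>z y. y \<in> H z \<longleftrightarrow> (z, y) \<in> G" unfolding H G_def by simp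
  have clH: "closed (H z)" for z unfolding H
    using closed_track[OF hf hg continuous_on_id continuous_on_const] by simp
  have cpH: "compact (H z)" for z
    using compact_Int_closed[OF cpt clH] by simp
  have conj: "f ` H z = H (g z)" for z
  proof
    show "f ` H z \<subseteq> H (g z)"
    proof (clarsimp simp: H)
      fix y n assume "\<forall>n. dist (iter f n y) (iter g n z) \<le> e"
      then have "dist (iter f (n+1) y) (iter g (n+1) z) \<le> e" by blast
      then show "dist (iter f n (f y)) (iter g n (g z)) \<le> e"
        using iter_succ(2)[OF bf, of n y] iter_succ(2)[OF bg, of n z] by simp
    qed
  next
    show "H (g z) \<subseteq> f ` H z"
    proof
      fix y' assume y': "y' \<in> H (g z)"
      have fi: "f (inv f y') = y'" using bf by (simp add: bij_is_surj surj_f_inv_f)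
      have "inv f y' \<in> H z" unfolding H
      proof (safe)
        fix n :: int
        have "iter f n (inv f y') = iter f (n - 1) y'"
          using iter_succ(2)[OF bf, of "n-1" "inv f y'"] fi by simp
        moreover have "iter g n z = iter g (n - 1) (g z)"
          using iter_succ(2)[OF bg, of "n-1" z] by simp
        ultimately show "dist (iter f n (inv f y')) (iter g n z) \<le> e"
          using y' unfolding H by simp
      qed
      then show "y' \<in> f ` H z" using fi by (metis image_eqI)
    qed
  qed
  have clZ: "closed Z" unfolding Z_def by simp
  have domeq: "dom_sv Z H = Z \<inter> fst ` G"
    unfolding dom_sv_def using HG by force
  have cldom: "closed (dom_sv Z H)" unfolding domeq
    using clZ compact_imp_closed[OF compact_continuous_image[OF continuous_on_fst[OF continuous_on_id] cpG]]
    by auto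
  have meas: "dom_sv Z H \<in> sets \<mu>" using cldom sts by simp
  have usc: "usc_on Z H" unfolding usc_on_def
  proof (intro ballI allI impI)
    fix z V assume z: "z \<in> dom_sv Z H" and V: "open V \<and> H z \<subseteq> V"
    define K where "K = G \<inter> (UNIV \<times> (- V))"
    have "closed (UNIV \<times> (- V))" using V by (intro closed_Times) auto
    then have "compact K" unfolding K_def using compact_Int_closed[OF cpG] by blast
    then have cK: "closed (fst ` K)"
      by (intro compact_imp_closed compact_continuous_image continuous_on_fst continuous_on_id)
    have "z \<notin> fst ` K" using V HG unfolding K_def by auto
    then obtain \<gamma> where g0: "\<gamma> > 0" and gb: "ball z \<gamma> \<subseteq> - fst ` K"
      using cK open_contains_ball[of "- fst ` K"] by (meson ComplI open_Compl)
    show "\<exists>\<gamma>>0. \<forall>w\<in>Z. dist w z < \<gamma> \<longrightarrow> H w \<subseteq> V"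
    proof (intro exI[of _ \<gamma>] conjI g0 ballI impI subsetI)
      fix w y assume "dist w z < \<gamma>" "y \<in> H w"
      then have "w \<in> ball z \<gamma>" "(w, y) \<in> G" using HG by (auto simp: dist_commute)
      then have "w \<notin> fst ` K" "(w, y) \<in> G" using gb by auto
      show "y \<in> V"
      proof (rule ccontr)
        assume "y \<notin> V"
        then have "(w, y) \<in> K" unfolding K_def using \<open>(w, y) \<in> G\<close> by auto
        then have "w \<in> fst ` K" by (metis fst_conv image_eqI)
        then show False using \<open>w \<notin> fst ` K\<close> by blast
      qed
    qed
  qed
  have sub: "H z \<subseteq> cball z \<epsilon>" for z
  proof
    fix y assume "y \<in> H z"
    then have "dist (iter f 0 y) (iter g 0 z) \<le> e" unfolding H by blast
    then have "dist y z \<le> e" by simp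
    then show "y \<in> cball z \<epsilon>" using e by (simp add: dist_commute)
  qed
  have zero: "emeasure \<mu> (H z) = 0" if z: "z \<in> ball x (\<delta>/4)" for z
  proof (cases "H z = {}")
    case True then show ?thesis by simp
  next
    case False
    then obtain y0 where y0: "y0 \<in> H z" by auto
    have inb: "y \<in> ball x c" if "y \<in> H z" for y
    proof -
      have "dist (iter f 0 y) (iter g 0 z) \<le> e" using that unfolding H by blast
      then have "dist y z \<le> e" by simp
      then have "dist z y \<le> e" by (simp add: dist_commute)
      moreover have "dist x z < \<delta>/4" using z by simp
      moreover have "dist x y \<le> dist x z + dist z y" by (rule dist_triangle)
      ultimately have "dist x y < c" using e d c by linarith
      then show ?thesis by simp
    qed
    have "H z \<subseteq> Gamma f c x y0"
      unfolding Gamma_def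
    proof (safe)
      fix y assume y: "y \<in> H z"
      show "y \<in> ball x c" using inb y .
      fix n :: int
      have "dist (iter f n y) (iter g n z) \<le> e" "dist (iter f n y0) (iter g n z) \<le> e"
        using y y0 unfolding H by auto
      moreover have "dist (iter f n y) (iter f n y0) \<le> dist (iter f n y) (iter g n z) + dist (iter f n y0) (iter g n z)"
        by (rule dist_triangle2)
      ultimately show "dist (iter f n y) (iter f n y0) \<le> c"
        using e by linarith
    qed
    moreover have "Gamma f c x y0 \<in> sets \<mu>"
    proof -
      have "Gamma f c x y0 = ball x c \<inter> {y. \<forall>n. dist (iter f n y) (iter f n y0) \<le> c}"
        unfolding Gamma_def by auto
      moreover have "closed {y. \<forall>n. dist (iter f n y) (iter f n y0) \<le> c}"
        using closed_track[OF hf hf continuous_on_id continuous_on_const] by simp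
      ultimately show ?thesis using sts by simp
    qed
    ultimately have "emeasure \<mu> (H z) \<le> emeasure \<mu> (Gamma f c x y0)"
      by (rule emeasure_mono)
    then show ?thesis using gam inb[OF y0] by simp
  qed
  show ?thesis unfolding stab_map_def Let_def Z_def[symmetric]
    using usc cpH meas zero sub conj by blast
qed

theorem theorem3p9:
  fixes f :: "'a::metric_space \<Rightarrow> 'a" and \<mu> :: "'a measure" and x :: 'a
  assumes "compact (UNIV :: 'a set)"
    and "is_homeo f"
    and "sets \<mu> = sets borel"
    and "emeasure \<mu> UNIV > 0"
    and "unif_expansive_point \<mu> f x"
  shows "top_stable_point \<mu> f x \<and>
         (shadowable_point \<mu> f x \<longrightarrow> strong_top_stable_point \<mu> f x)"
proof -
  note cpt = assms(1) and hf = assms(2) and sts = assms(3)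
  obtain c where c: "c > 0" and gam: "\<forall>z\<in>ball x c. emeasure \<mu> (Gamma f c x z) = 0"
    using assms(5) unfolding unif_expansive_point_def by blast
  have part1: "top_stable_point \<mu> f x"
    unfolding top_stable_point_def
  proof (intro allI impI)
    fix \<epsilon> :: real assume e0: "\<epsilon> > 0"
    define e where "e = min \<epsilon> (c/3)"
    have e: "0 < e" "e \<le> \<epsilon>" "e \<le> c/3" using e0 c unfolding e_def by auto
    show "\<exists>\<delta>>0. \<forall>g. is_homeo g \<and> C0_close f g \<delta> \<longrightarrow> (\<exists>H. stab_map \<mu> f g x \<epsilon> \<delta> H)"
    proof (intro exI[of _ "c/3"] conjI allI impI)
      show "c/3 > 0" using c by simp
      fix g assume "is_homeo g \<and> C0_close f g (c/3)"
      then have hg: "is_homeo g" by blast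
      show "\<exists>H. stab_map \<mu> f g x \<epsilon> (c/3) H"
        using key[OF cpt hf hg sts c gam e, of "c/3"] c by auto
    qed
  qed
  have part2: "strong_top_stable_point \<mu> f x" if sh: "shadowable_point \<mu> f x"
    unfolding strong_top_stable_point_def
  proof (intro allI impI)
    fix \<epsilon> :: real assume e0: "\<epsilon> > 0"
    define e where "e = min \<epsilon> (c/3)"
    have e: "0 < e" "e \<le> \<epsilon>" "e \<le> c/3" using e0 c unfolding e_def by auto
    obtain ds B where ds: "ds > 0" and B: "B \<in> sets \<mu>" "emeasure \<mu> (UNIV - B) = 0"
      and tr: "\<And>\<xi>. pseudo_orbit f ds \<xi> \<and> \<xi> 0 \<in> B \<inter> ball x ds \<Longrightarrow> traced f e \<xi>"
      using sh e(1) unfolding shadowable_point_def by meson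
    define \<delta> where "\<delta> = min (ds/2) (c/3)"
    have d: "0 < \<delta>" "\<delta> \<le> c/3" "\<delta> < ds" using ds c unfolding \<delta>_def by auto
    show "\<exists>\<delta>>0. \<exists>B\<in>sets \<mu>. emeasure \<mu> (UNIV - B) = 0 \<and>
       (\<forall>g. is_homeo g \<and> C0_close f g \<delta> \<longrightarrow>
        (\<exists>H. stab_map \<mu> f g x \<epsilon> \<delta> H \<and>
           emeasure \<mu> (UNIV - dom_sv (closure (orbit g x)) H)
             \<le> emeasure \<mu> (UNIV - (B \<inter> ball x \<delta> \<inter> closure (orbit g x)))))"
    proof (intro exI[of _ \<delta>] conjI bexI[of _ B] allI impI)
      show "\<delta> > 0" using d by simp
      show "B \<in> sets \<mu>" "emeasure \<mu> (UNIV - B) = 0" using B by auto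
      fix g assume gass: "is_homeo g \<and> C0_close f g \<delta>"
      then have hg: "is_homeo g" and cl: "\<And>y. dist (f y) (g y) \<le> \<delta>"
        unfolding C0_close_def by auto
      have bg: "bij g" using homeo_facts(1)[OF hg] .
      define H where "H = (\<lambda>z. {y. \<forall>n. dist (iter f n y) (iter g n z) \<le> e})"
      define Z where "Z = closure (orbit g x)"
      have st: "stab_map \<mu> f g x \<epsilon> \<delta> H"
        using key[OF cpt hf hg sts c gam e d(1) d(2) H_def] .
      have sub: "B \<inter> ball x \<delta> \<inter> Z \<subseteq> dom_sv Z H"
      proof
        fix z assume z: "z \<in> B \<inter> ball x \<delta> \<inter> Z"
        define \<xi> where "\<xi> = (\<lambda>n. iter g n z)"
        have "pseudo_orbit f ds \<xi>" unfolding pseudo_orbit_def \<xi>_def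
        proof
          fix n
          show "dist (f (iter g n z)) (iter g (n + 1) z) < ds"
            using cl[of "iter g n z"] iter_succ(1)[OF bg, of n z] d(3) by simp
        qed
        moreover have "\<xi> 0 \<in> B \<inter> ball x ds" using z d(3) unfolding \<xi>_def by auto
        ultimately have "traced f e \<xi>" using tr by blast
        then obtain y where "\<forall>n. dist (iter f n y) (iter g n z) < e"
          unfolding traced_def \<xi>_def by blast
        then have "y \<in> H z" unfolding H_def by (simp add: less_imp_le)
        then show "z \<in> dom_sv Z H" using z unfolding dom_sv_def by auto
      qed
      have "B \<inter> ball x \<delta> \<inter> Z \<in> sets \<mu>"
        using B sts unfolding Z_def by simp
      then have "UNIV - (B \<inter> ball x \<delta> \<inter> Z) \<in> sets \<mu>"
        using sets.compl_sets[of "B \<inter> ball x \<delta> \<inter> Z" \<mu>] sts by simp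
      then have "emeasure \<mu> (UNIV - dom_sv Z H) \<le> emeasure \<mu> (UNIV - (B \<inter> ball x \<delta> \<inter> Z))"
        using sub by (intro emeasure_mono) auto
      then show "\<exists>H. stab_map \<mu> f g x \<epsilon> \<delta> H \<and>
           emeasure \<mu> (UNIV - dom_sv (closure (orbit g x)) H)
             \<le> emeasure \<mu> (UNIV - (B \<inter> ball x \<delta> \<inter> closure (orbit g x)))"
        using st unfolding Z_def by blast
    qed
  qed
  show ?thesis using part1 part2 by blast
qed

end
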